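(* For every $\epsilon>0$, $n,k\in\mathbb N$ and $T\in M_k(\mathcal B^{(n)})$, we have $L_k(\sigma^{(n)}_T)<L^{(n)}_k(T)+\epsilon$.
   Context: $G$ is a connected compact semisimple Lie group and $l$ a continuous length function on $G$ ($l\ge0$, $l(x)=0$ iff $x=e$, $l(x^{-1})=l(x)$, $l(xy)\le l(x)+l(y)$) with $l(xyx^{-1})=l(y)$ for all $x,y$. $(U,\mathcal H)$ is a fixed irreducible unitary representation of $G$ with highest weight vector $\xi$, $\|\xi\|=1$; $P$ is the rank-one projection onto $\mathbb C\xi$ and $H$ the stability subgroup of $P$ under $x\mapsto U_xPU_x^*$. For $n\in\mathbb N$, $(U^{(n)},\mathcal H^{(n)})$ is the subrepresentation of $U^{\otimes n}$ generated by $\xi^{\otimes n}$, $P^{(n)}$ the rank-one projection onto $\mathbb C\xi^{\otimes n}$, $\mathcal B^{(n)}=\mathcal B(\mathcal H^{(n)})$ with action $\alpha^{(n)}_x(T)=U^{(n)}_xTU^{(n)*}_x$ and usual trace $\tau^{(n)}$. $\mathcal A=C(G/H)$ with left translation $(\lambda_xf)(y)=f(x^{-1}y)$. Berezin symbol: $\sigma^{(n)}_T(x)=\tau^{(n)}(T\alpha^{(n)}_x(P^{(n)}))$ for $T\in\mathcal B^{(n)}$, $x\in G/H$; for $T=[T_{ij}]\in M_k(\mathcal B^{(n)})$, $\sigma^{(n)}_T=[\sigma^{(n)}_{T_{ij}}]$. Norms: $\|f\|_{\infty,k}=\sup_x\|[f_{ij}(x)]\|_{M_k}$ on $M_k(\mathcal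 A)$; operator norm on $M_k(\mathcal B^{(n)})$. $L^{(n)}_k(T)=\sup_{x\ne e}\|[\alpha^{(n)}_x(T_{ij})-T_{ij}]\|/l(x)$ and $L_k(f)=\sup_{x\ne e}\|[\lambda_x(f_{ij})-f_{ij}]\|_{\infty,k}/l(x)$ (possibly $+\infty$). *)

theory Defs
  imports "HOL-Analysis.Analysis" "HOL-Library.Extended_Nonnegative_Real"
begin

definition adj :: "complex^'n^'m \<Rightarrow> complex^'m^'n" where
  "adj A = (\<chi> i j. cnj (A $ j $ i))"

definition cscaleM :: "complex \<Rightarrow> complex^'n^'m \<Rightarrow> complex^'n^'m" where
  "cscaleM c A = (\<chi> i j. c * A $ i $ j)"

definition cinner :: "complex^'n \<Rightarrow> complex^'n \<Rightarrow> complex" where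
  "cinner v w = (\<Sum>i\<in>UNIV. cnj (v $ i) * w $ i)"

definition unitary_mat :: "complex^'n^'n \<Rightarrow> bool" where
  "unitary_mat A \<longleftrightarrow> adj A ** A = mat 1"

definition csubspace :: "(complex^'n) set \<Rightarrow> bool" where
  "csubspace S \<longleftrightarrow> 0 \<in> S \<and> (\<forall>v\<in>S. \<forall>w\<in>S. v + w \<in> S) \<and> (\<forall>c. \<forall>v\<in>S. c *s v \<in> S)"

definition cspanV :: "(complex^'n) set \<Rightarrow> (complex^'n) set" where
  "cspanV S = {\<Sum>v\<in>F. c v *s v | F c. finite F \<and> F \<subseteq> S}"

definition cspanM :: "(complex^'n^'m) set \<Rightarrow> (complex^'n^'m) set" where
  "cspanM S = {\<Sum>A\<in>F. cscaleM (c A) A | F c. finite F \<and> F \<subseteq> S}"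

definition opnorm :: "complex^'n^'m \<Rightarrow> real" where
  "opnorm A = onorm (\<lambda>v. A *v v)"

fun mpow :: "complex^'n^'n \<Rightarrow> nat \<Rightarrow> complex^'n^'n" where
  "mpow A 0 = mat 1"
| "mpow A (Suc m) = A ** mpow A m"

definition mexp :: "complex^'n^'n \<Rightarrow> complex^'n^'n" where
  "mexp X = (\<Sum>m. (1 / fact m) *\<^sub>R mpow X m)"

definition bracket :: "complex^'n^'n \<Rightarrow> complex^'n^'n \<Rightarrow> complex^'n^'n" where
  "bracket A B = A ** B - B ** A"

text \<open>Every compact Lie group is (isomorphic to) a compact subgroup of some GL_d(C);
  conversely every compact subgroup of GL_d(C) is a Lie group (closed subgroup theorem).\<close>
definition compact_matrix_group :: "(complex^'d^'d) set \<Rightarrow> bool" where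
  "compact_matrix_group G \<longleftrightarrow> compact G \<and> mat 1 \<in> G \<and>
     (\<forall>x\<in>G. \<forall>y\<in>G. x ** y \<in> G) \<and> (\<forall>x\<in>G. invertible x \<and> matrix_inv x \<in> G)"

definition lie_alg :: "(complex^'d^'d) set \<Rightarrow> (complex^'d^'d) set" where
  "lie_alg G = {X. \<forall>t::real. mexp (t *\<^sub>R X) \<in> G}"

definition semisimple_lie_alg :: "(complex^'d^'d) set \<Rightarrow> bool" where
  "semisimple_lie_alg g \<longleftrightarrow>
     (\<forall>I. subspace I \<and> I \<subseteq> g \<and> (\<forall>X\<in>g. \<forall>Y\<in>I. bracket X Y \<in> I) \<and>
          (\<forall>X\<in>I. \<forall>Y\<in>I. bracket X Y = 0) \<longrightarrow> I = {0})"

definition connected_compact_semisimple_group :: "(complex^'d^'d) set \<Rightarrow> bool" where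
  "connected_compact_semisimple_group G \<longleftrightarrow>
     compact_matrix_group G \<and> connected G \<and> semisimple_lie_alg (lie_alg G)"

definition conj_inv_length_function :: "(complex^'d^'d) set \<Rightarrow> (complex^'d^'d \<Rightarrow> real) \<Rightarrow> bool" where
  "conj_inv_length_function G l \<longleftrightarrow> continuous_on G l \<and>
     (\<forall>x\<in>G. l x \<ge> 0) \<and> (\<forall>x\<in>G. l x = 0 \<longleftrightarrow> x = mat 1) \<and>
     (\<forall>x\<in>G. l (matrix_inv x) = l x) \<and> (\<forall>x\<in>G. \<forall>y\<in>G. l (x ** y) \<le> l x + l y) \<and>
     (\<forall>x\<in>G. \<forall>y\<in>G. l (x ** y ** matrix_inv x) = l y)"

definition unitary_rep :: "(complex^'d^'d) set \<Rightarrow> (complex^'d^'d \<Rightarrow> complex^'a^'a) \<Rightarrow> bool" where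
  "unitary_rep G U \<longleftrightarrow> continuous_on G U \<and> (\<forall>x\<in>G. unitary_mat (U x)) \<and>
     (\<forall>x\<in>G. \<forall>y\<in>G. U (x ** y) = U x ** U y)"

definition irreducible_rep :: "(complex^'d^'d) set \<Rightarrow> (complex^'d^'d \<Rightarrow> complex^'a^'a) \<Rightarrow> bool" where
  "irreducible_rep G U \<longleftrightarrow> unitary_rep G U \<and>
     (\<forall>S. csubspace S \<and> (\<forall>x\<in>G. \<forall>v\<in>S. U x *v v \<in> S) \<longrightarrow> S = {0} \<or> S = UNIV)"

definition dRep :: "(complex^'d^'d \<Rightarrow> complex^'a^'a) \<Rightarrow> complex^'d^'d \<Rightarrow> complex^'a^'a" where
  "dRep U X = vector_derivative (\<lambda>t::real. U (mexp (t *\<^sub>R X))) (at 0)"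

text \<open>complexified Lie algebra, realised inside complex matrices\<close>
definition complexify :: "(complex^'d^'d) set \<Rightarrow> (complex^'d^'d) set" where
  "complexify g = {X + cscaleM \<i> Y | X Y. X \<in> g \<and> Y \<in> g}"

definition cLie_subalg :: "(complex^'d^'d) set \<Rightarrow> bool" where
  "cLie_subalg b \<longleftrightarrow> 0 \<in> b \<and> (\<forall>A\<in>b. \<forall>B\<in>b. A + B \<in> b \<and> bracket A B \<in> b) \<and>
     (\<forall>c. \<forall>A\<in>b. cscaleM c A \<in> b)"

definition derivedM :: "(complex^'d^'d) set \<Rightarrow> (complex^'d^'d) set" where
  "derivedM S = cspanM {bracket A B | A B. A \<in> S \<and> B \<in> S}"

definition solvableM :: "(complex^'d^'d) set \<Rightarrow> bool" where
  "solvableM S \<longleftrightarrow> (\<exists>m. (derivedM ^^ m) S \<subseteq> {0})"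

definition borel_subalg :: "(complex^'d^'d) set \<Rightarrow> (complex^'d^'d) set \<Rightarrow> bool" where
  "borel_subalg g b \<longleftrightarrow> b \<subseteq> complexify g \<and> cLie_subalg b \<and> solvableM b \<and>
     (\<forall>b'. b \<subseteq> b' \<and> b' \<subseteq> complexify g \<and> cLie_subalg b' \<and> solvableM b' \<longrightarrow> b' = b)"

text \<open>highest weight vector (for some choice of maximal torus and positive roots, i.e.
  of Borel subalgebra): a nonzero common eigenvector of a Borel subalgebra\<close>
definition highest_weight_vector ::
  "(complex^'d^'d) set \<Rightarrow> (complex^'d^'d \<Rightarrow> complex^'a^'a) \<Rightarrow> complex^'a \<Rightarrow> bool" where
  "highest_weight_vector G U \<xi> \<longleftrightarrow> \<xi> \<noteq> 0 \<and>
     (\<exists>b. borel_subalg (lie_alg G) b \<and>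
        (\<forall>X\<in>lie_alg G. \<forall>Y\<in>lie_alg G. X + cscaleM \<i> Y \<in> b \<longrightarrow>
            (\<exists>c. (dRep U X + cscaleM \<i> (dRep U Y)) *v \<xi> = c *s \<xi>)))"

text \<open>The n-fold tensor power of \<open>complex^'a\<close> is \<open>complex^('n \<Rightarrow> 'a)\<close> with n = CARD('n).\<close>
definition tensU :: "complex^'a::finite^'a \<Rightarrow> complex^('n::finite \<Rightarrow> 'a)^('n \<Rightarrow> 'a)" where
  "tensU A = (\<chi> f g. \<Prod>i\<in>UNIV. A $ (f i) $ (g i))"

definition tensv :: "complex^'a::finite \<Rightarrow> complex^('n::finite \<Rightarrow> 'a)" where
  "tensv v = (\<chi> f. \<Prod>i\<in>UNIV. v $ (f i))"

definition Hn :: "(complex^'d^'d) set \<Rightarrow> (complex^'d^'d \<Rightarrow> complex^'a^'a) \<Rightarrow> complex^'a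
                    \<Rightarrow> (complex^('n::finite \<Rightarrow> 'a::finite)) set" where
  "Hn G U \<xi> = cspanV {tensU (U x) *v tensv \<xi> | x. x \<in> G}"

text \<open>B(V) for a subspace V, represented by the operators on the ambient space
  which map into V and vanish on the orthogonal complement of V\<close>
definition opsOn :: "(complex^'i) set \<Rightarrow> (complex^'i^'i) set" where
  "opsOn V = {T. (\<forall>v. T *v v \<in> V) \<and> (\<forall>v. (\<forall>w\<in>V. cinner w v = 0) \<longrightarrow> T *v v = 0)}"

definition alphan :: "(complex^'d^'d \<Rightarrow> complex^'a::finite^'a) \<Rightarrow> complex^'d^'d
     \<Rightarrow> complex^('n::finite \<Rightarrow> 'a)^('n \<Rightarrow> 'a) \<Rightarrow> complex^('n \<Rightarrow> 'a)^('n \<Rightarrow> 'a)" where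
  "alphan U x T = tensU (U x) ** T ** adj (tensU (U x))"

definition Pn :: "complex^'a::finite \<Rightarrow> complex^('n::finite \<Rightarrow> 'a)^('n \<Rightarrow> 'a)" where
  "Pn \<xi> = (\<chi> p q. tensv \<xi> $ p * cnj (tensv \<xi> $ q))"

text \<open>Berezin symbol, as a function on G (constant on the cosets xH)\<close>
definition berezin :: "(complex^'d^'d \<Rightarrow> complex^'a::finite^'a) \<Rightarrow> complex^'a
     \<Rightarrow> complex^('n::finite \<Rightarrow> 'a)^('n \<Rightarrow> 'a) \<Rightarrow> complex^'d^'d \<Rightarrow> complex" where
  "berezin U \<xi> T x = trace (T ** alphan U x (Pn \<xi>))"

text \<open>k x k block matrix over operators, as one operator on C^k \<otimes> space\<close>
definition blockop :: "('k::finite \<Rightarrow> 'k \<Rightarrow> complex^'i^'i) \<Rightarrow> complex^('k \<times> 'i)^('k \<times> 'i)" where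
  "blockop T = (\<chi> p q. T (fst p) (fst q) $ snd p $ snd q)"

definition supnormk :: "(complex^'d^'d) set \<Rightarrow> ('k::finite \<Rightarrow> 'k \<Rightarrow> complex^'d^'d \<Rightarrow> complex) \<Rightarrow> real" where
  "supnormk G f = (SUP y\<in>G. opnorm ((\<chi> i j. f i j y) :: complex^'k^'k))"

definition Lk :: "(complex^'d^'d \<Rightarrow> real) \<Rightarrow> (complex^'d^'d) set
     \<Rightarrow> ('k::finite \<Rightarrow> 'k \<Rightarrow> complex^'d^'d \<Rightarrow> complex) \<Rightarrow> ennreal" where
  "Lk l G f = (SUP x\<in>G - {mat 1}.
      ennreal (supnormk G (\<lambda>i j y. f i j (matrix_inv x ** y) - f i j y) / l x))"

definition Lnk :: "(complex^'d^'d \<Rightarrow> real) \<Rightarrow> (complex^'d^'d) set \<Rightarrow> (complex^'d^'d \<Rightarrow> complex^'a::finite^'a)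
     \<Rightarrow> ('k::finite \<Rightarrow> 'k \<Rightarrow> complex^('n::finite \<Rightarrow> 'a)^('n \<Rightarrow> 'a)) \<Rightarrow> ennreal" where
  "Lnk l G U T = (SUP x\<in>G - {mat 1}.
      ennreal (opnorm (blockop (\<lambda>i j. alphan U x (T i j) - T i j)) / l x))"

end

theory Submission
  imports Defs
begin

lemma vec_norm_sq: "(norm (x::'a::real_normed_vector^'n))^2 = (\<Sum>i\<in>UNIV. (norm (x$i))^2)"
  by (simp add: norm_vec_def L2_set_def sum_nonneg)

lemma mat_norm_sq: "(norm (A::complex^'n^'m))^2 = (\<Sum>i\<in>UNIV. \<Sum>j\<in>UNIV. (cmod (A$i$j))^2)"
  by (simp add: vec_norm_sq)

lemma cauchy_schwarz_c:
  "(cmod (\<Sum>i\<in>S. a i * b i))^2 \<le> (\<Sum>i\<in>S. (cmod (a i))^2) * (\<Sum>i\<in>S. (cmod (b i))^2)"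
proof -
  have "cmod (\<Sum>i\<in>S. a i * b i) \<le> (\<Sum>i\<in>S. cmod (a i) * cmod (b i))"
    using norm_sum[of "\<lambda>i. a i * b i" S] by (simp add: norm_mult)
  then have "(cmod (\<Sum>i\<in>S. a i * b i))^2 \<le> (\<Sum>i\<in>S. cmod (a i) * cmod (b i))^2"
    by (simp add: power_mono)
  also have "\<dots> \<le> (\<Sum>i\<in>S. (cmod (a i))^2) * (\<Sum>i\<in>S. (cmod (b i))^2)"
    by (rule Cauchy_Schwarz_ineq_sum)
  finally show ?thesis .
qed

lemma mv_norm: "norm ((A::complex^'n^'m) *v v) \<le> norm A * norm v"
proof -
  have "(norm (A *v v))^2 = (\<Sum>i\<in>UNIV. (cmod (\<Sum>j\<in>UNIV. A$i$j * v$j))^2)"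
    by (simp add: vec_norm_sq matrix_vector_mult_def)
  also have "\<dots> \<le> (\<Sum>i\<in>UNIV. (\<Sum>j\<in>UNIV. (cmod (A$i$j))^2) * (\<Sum>j\<in>UNIV. (cmod (v$j))^2))"
    by (rule sum_mono) (rule cauchy_schwarz_c)
  also have "\<dots> = (norm A * norm v)^2"
    by (simp add: mat_norm_sq vec_norm_sq power_mult_distrib sum_distrib_right)
  finally show ?thesis by (rule power2_le_imp_le) simp
qed

lemma mm_norm: "norm ((A::complex^'n^'m) ** (B::complex^'p^'n)) \<le> norm A * norm B"
proof -
  have "(norm (A ** B))^2 = (\<Sum>i\<in>UNIV. \<Sum>k\<in>UNIV. (cmod (\<Sum>j\<in>UNIV. A$i$j * B$j$k))^2)"
    by (simp add: mat_norm_sq matrix_matrix_mult_def)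
  also have "\<dots> \<le> (\<Sum>i\<in>UNIV. \<Sum>k\<in>UNIV. (\<Sum>j\<in>UNIV. (cmod (A$i$j))^2) * (\<Sum>j\<in>UNIV. (cmod (B$j$k))^2))"
    by (intro sum_mono cauchy_schwarz_c)
  also have "\<dots> = (\<Sum>i\<in>UNIV. \<Sum>j\<in>UNIV. (cmod (A$i$j))^2) * (\<Sum>k\<in>UNIV. \<Sum>j\<in>UNIV. (cmod (B$j$k))^2)"
    by (rule sum_product[symmetric])
  finally have 1: "(norm (A ** B))^2 \<le> (\<Sum>i\<in>UNIV. \<Sum>j\<in>UNIV. (cmod (A$i$j))^2) * (\<Sum>k\<in>UNIV. \<Sum>j\<in>UNIV. (cmod (B$j$k))^2)" .
  have 2: "(\<Sum>k\<in>UNIV. \<Sum>j\<in>UNIV. (cmod (B$j$k))^2) = (norm B)^2"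
    unfolding mat_norm_sq by (rule sum.swap)
  have 3: "(\<Sum>i\<in>UNIV. \<Sum>j\<in>UNIV. (cmod (A$i$j))^2) = (norm A)^2"
    by (rule mat_norm_sq[symmetric])
  have "(norm (A ** B))^2 \<le> (norm A * norm B)^2"
    using 1 unfolding 2 3 power_mult_distrib .
  then show ?thesis by (rule power2_le_imp_le) simp
qed

lemma opnorm_mv: "norm ((A::complex^'n^'m) *v v) \<le> opnorm A * norm v"
  unfolding opnorm_def by (rule onorm) (rule matrix_vector_mul_bounded_linear)

lemma opnorm_le: "(\<And>v. norm ((A::complex^'n^'m) *v v) \<le> b * norm v) \<Longrightarrow> opnorm A \<le> b"
  unfolding opnorm_def by (rule onorm_le)

lemma opnorm_fro: "opnorm (A::complex^'n^'m) \<le> norm A"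
  by (rule opnorm_le) (rule mv_norm)

lemma msub_ldistrib: "(A::'a::ring_1^'n^'m) ** (B - C) = A ** B - A ** C"
  by (simp add: matrix_matrix_mult_def vec_eq_iff sum_subtractf right_diff_distrib)

lemma msub_rdistrib: "((A::'a::ring_1^'n^'m) - B) ** C = A ** C - B ** C"
  by (simp add: matrix_matrix_mult_def vec_eq_iff sum_subtractf left_diff_distrib)

lemma madd_rdistrib: "((A::'a::ring_1^'n^'m) + B) ** C = A ** C + B ** C"
  by (simp add: matrix_matrix_mult_def vec_eq_iff sum.distrib distrib_right)

lemma adj_nth[simp]: "adj A $ i $ j = cnj (A $ j $ i)"
  by (simp add: adj_def)

lemma adj_adj[simp]: "adj (adj A) = A"
  by (simp add: vec_eq_iff)

lemma adj_mult: "adj (A ** B) = adj B ** adj A"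
  by (simp add: vec_eq_iff matrix_matrix_mult_def mult.commute)

lemma adj_diff: "adj (A - B) = adj A - adj B"
  by (simp add: vec_eq_iff)

lemma adj_one[simp]: "adj (mat 1) = mat 1"
  by (simp add: vec_eq_iff mat_def)

lemma norm_adj: "norm (adj A) = norm A"
proof -
  have "(norm (adj A))^2 = (\<Sum>i\<in>UNIV. \<Sum>j\<in>UNIV. (cmod (A$j$i))^2)"
    by (simp add: mat_norm_sq)
  also have "\<dots> = (norm A)^2" unfolding mat_norm_sq by (rule sum.swap)
  finally have "(norm (adj A))^2 = (norm A)^2" .
  then show ?thesis by (simp add: power2_eq_iff_nonneg)
qed

lemma cinner_adj: "cinner (A *v v) w = cinner v (adj A *v w)"
proof -
  have "cinner (A *v v) w = (\<Sum>i\<in>UNIV. \<Sum>j\<in>UNIV. cnj (A$i$j) * cnj (v$j) * w$i)"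
    by (simp add: cinner_def matrix_vector_mult_def sum_distrib_right)
  also have "\<dots> = (\<Sum>j\<in>UNIV. \<Sum>i\<in>UNIV. cnj (A$i$j) * cnj (v$j) * w$i)"
    by (rule sum.swap)
  also have "\<dots> = cinner v (adj A *v w)"
    by (simp add: cinner_def matrix_vector_mult_def sum_distrib_left mult_ac)
  finally show ?thesis .
qed

lemma cinner_self: "cinner v v = complex_of_real ((norm v)^2)"
proof -
  have e: "cnj (v$i) * v$i = complex_of_real ((cmod (v$i))^2)" for i
    by (simp only: complex_norm_square mult.commute)
  have "cinner v v = (\<Sum>i\<in>UNIV. complex_of_real ((cmod (v$i))^2))"
    unfolding cinner_def by (simp only: e)
  also have "\<dots> = complex_of_real ((norm v)^2)"
    by (simp only: of_real_sum[symmetric] vec_norm_sq)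
  finally show ?thesis .
qed

lemma unitary_norm:
  assumes "adj A ** A = mat 1"
  shows "norm (A *v v) = norm v"
proof -
  have "cinner (A *v v) (A *v v) = cinner v v"
    by (simp add: cinner_adj matrix_vector_mul_assoc assms)
  then have "complex_of_real ((norm (A *v v))^2) = complex_of_real ((norm v)^2)"
    by (simp only: cinner_self)
  then have "(norm (A *v v))^2 = (norm v)^2"
    by (simp only: of_real_eq_iff)
  then show ?thesis by (simp add: power2_eq_iff_nonneg)
qed

lemma prod_sum_fun:
  "(\<Sum>f\<in>(UNIV::('n::finite \<Rightarrow> 'a::finite) set). \<Prod>i\<in>UNIV. g i (f i))
     = (\<Prod>i\<in>UNIV. \<Sum>a\<in>UNIV. (g i a :: 'c::comm_semiring_1))"
  using prod_sum_PiE[of "UNIV::'n set" "\<lambda>_. UNIV::'a set" g] by simp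

lemma tensU_mult:
  "tensU A ** tensU B = (tensU (A ** B) :: complex^('n::finite \<Rightarrow> 'a::finite)^('n \<Rightarrow> 'a))"
proof -
  have "(\<Sum>g\<in>UNIV. (\<Prod>i\<in>UNIV. A $ f i $ g i) * (\<Prod>i\<in>UNIV. B $ g i $ h i))
        = (\<Prod>i\<in>UNIV. (A ** B) $ f i $ h i)" for f h :: "'n \<Rightarrow> 'a"
  proof -
    have "(\<Sum>g\<in>UNIV. (\<Prod>i\<in>UNIV. A $ f i $ g i) * (\<Prod>i\<in>UNIV. B $ g i $ h i))
        = (\<Sum>g\<in>UNIV. \<Prod>i\<in>UNIV. A $ f i $ g i * B $ g i $ h i)"
      by (simp add: prod.distrib)
    also have "\<dots> = (\<Prod>i\<in>UNIV. \<Sum>b\<in>UNIV. A $ f i $ b * B $ b $ h i)"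
      by (rule prod_sum_fun[of "\<lambda>i b. A $ f i $ b * B $ b $ h i"])
    finally show ?thesis by (simp add: matrix_matrix_mult_def)
  qed
  then show ?thesis
    by (simp add: vec_eq_iff tensU_def matrix_matrix_mult_def)
qed

lemma tensU_one: "(tensU (mat 1) :: complex^('n::finite \<Rightarrow> 'a::finite)^('n \<Rightarrow> 'a)) = mat 1"
proof -
  have "(\<Prod>i\<in>UNIV. (mat 1 :: complex^'a^'a) $ f i $ g i) = (if f = g then 1 else 0)" for f g :: "'n \<Rightarrow> 'a"
  proof (cases "f = g")
    case True then show ?thesis by (simp add: mat_def)
  next
    case False
    then obtain i where "f i \<noteq> g i" by auto
    then have "(mat 1 :: complex^'a^'a) $ f i $ g i = 0" by (simp add: mat_def)
    then have "(\<Prod>i\<in>UNIV. (mat 1 :: complex^'a^'a) $ f i $ g i) = 0"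
      by (intro prod_zero) auto
    then show ?thesis using False by simp
  qed
  then show ?thesis by (simp add: vec_eq_iff tensU_def mat_def)
qed

lemma adj_tensU: "adj (tensU A) = (tensU (adj A) :: complex^('n::finite \<Rightarrow> 'a::finite)^('n \<Rightarrow> 'a))"
  by (simp add: vec_eq_iff tensU_def cnj_prod)

lemma norm_tensv:
  assumes "norm \<xi> = 1"
  shows "norm (tensv \<xi> :: complex^('n::finite \<Rightarrow> 'a::finite)) = 1"
proof -
  have "(norm (tensv \<xi> :: complex^('n \<Rightarrow> 'a)))^2 = (\<Sum>f\<in>(UNIV::('n\<Rightarrow>'a) set). \<Prod>i\<in>UNIV. (cmod (\<xi> $ f i))^2)"
    by (simp add: vec_norm_sq tensv_def prod_norm[symmetric] prod_power_distrib)
  also have "\<dots> = (\<Prod>i\<in>(UNIV::'n set). \<Sum>a\<in>UNIV. (cmod (\<xi> $ a))^2)"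
    by (rule prod_sum_fun[of "\<lambda>i a. (cmod (\<xi> $ a))^2"])
  also have "\<dots> = 1" using assms by (simp add: vec_norm_sq[symmetric])
  finally show ?thesis using power2_eq_iff_nonneg[of "norm (tensv \<xi> :: complex^('n\<Rightarrow>'a))" 1] by simp
qed

lemma pow_telescope:
  fixes V :: "complex^'n^'n"
  shows "(\<Sum>j<M. V - mat 1) = (mpow V M - mat 1) + (V - mat 1) ** (\<Sum>j<M. mat 1 - mpow V j)"
proof (induction M)
  case 0 then show ?case by simp
next
  case (Suc M)
  let ?S = "\<Sum>j<M. mat 1 - mpow V j"
  have e: "(V - mat 1) ** mpow V M = mpow V (Suc M) - mpow V M"
    by (simp add: msub_rdistrib)
  have e2: "(V - mat 1) ** (?S + (mat 1 - mpow V M))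
      = (V - mat 1) ** ?S + (V - mat 1) - (mpow V (Suc M) - mpow V M)"
    by (simp only: matrix_add_ldistrib msub_ldistrib matrix_mul_rid e) (simp add: algebra_simps)
  have "(\<Sum>j<Suc M. V - mat 1) = (\<Sum>j<M. V - mat 1) + (V - mat 1)" by (simp only: sum.lessThan_Suc)
  also have "\<dots> = (mpow V M - mat 1) + (V - mat 1) ** ?S + (V - mat 1)" using Suc by simp
  also have "\<dots> = (mpow V (Suc M) - mat 1) + (V - mat 1) ** (?S + (mat 1 - mpow V M))"
    unfolding e2 by (simp add: algebra_simps)
  also have "?S + (mat 1 - mpow V M) = (\<Sum>j<Suc M. mat 1 - mpow V j)" by (simp only: sum.lessThan_Suc)
  finally show ?case .
qed

lemma power_lemma:
  fixes V :: "complex^'n^'n"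
  assumes M: "M \<ge> 1" and h: "\<And>j. 1 \<le> j \<Longrightarrow> j \<le> M \<Longrightarrow> norm (mpow V j - mat 1) \<le> 1/2"
  shows "norm (V - mat 1) \<le> 1 / real M"
proof -
  let ?f = "norm (V - mat 1)"
  have s: "norm (\<Sum>j<M. mat 1 - mpow V j) \<le> real M / 2"
  proof -
    have "norm (\<Sum>j<M. mat 1 - mpow V j) \<le> (\<Sum>j<M. norm (mat 1 - mpow V j))" by (rule norm_sum)
    also have "\<dots> \<le> (\<Sum>j<M. 1/2)"
    proof (rule sum_mono)
      fix j assume j: "j \<in> {..<M}"
      show "norm (mat 1 - mpow V j) \<le> 1/2"
      proof (cases "j = 0")
        case True then show ?thesis by simp
      next
        case False then show ?thesis using h[of j] j by (simp add: norm_minus_commute)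
      qed
    qed
    also have "\<dots> = real M / 2" by simp
    finally show ?thesis .
  qed
  have "real M * ?f = norm (\<Sum>j<M. V - mat 1)"
    by (simp only: sum_constant_scaleR norm_scaleR card_lessThan abs_of_nat)
  also have "\<dots> \<le> norm (mpow V M - mat 1) + ?f * norm (\<Sum>j<M. mat 1 - mpow V j)"
    unfolding pow_telescope by (rule order_trans[OF norm_triangle_ineq add_left_mono[OF mm_norm]])
  also have "\<dots> \<le> 1/2 + ?f * (real M / 2)"
    using h[of M] M s by (intro add_mono mult_left_mono) auto
  finally have "real M * ?f \<le> 1/2 + ?f * (real M / 2)" .
  then have "real M * ?f \<le> 1/2 + (real M * ?f) / 2" by (simp add: mult.commute)
  then have "real M * ?f \<le> 1" by linarith
  then show ?thesis using M by (simp add: field_simps)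
qed

definition WW :: "(complex^'d^'d \<Rightarrow> complex^'a::finite^'a) \<Rightarrow> complex^'d^'d
    \<Rightarrow> complex^('n::finite \<Rightarrow> 'a)^('n \<Rightarrow> 'a)" where
  "WW U x = tensU (U x)"

lemma alphan_WW: "alphan U x T = WW U x ** T ** adj (WW U x)"
  by (simp add: alphan_def WW_def)

lemma U_one:
  assumes "unitary_rep G U" "mat 1 \<in> G"
  shows "U (mat 1) = mat 1"
proof -
  let ?u = "U (mat 1)"
  have m: "?u = ?u ** ?u" using assms unfolding unitary_rep_def
    by (metis matrix_mul_lid)
  have a: "adj ?u ** ?u = mat 1" using assms unfolding unitary_rep_def unitary_mat_def by blast
  have "?u = (adj ?u ** ?u) ** ?u" by (simp add: a)
  also have "\<dots> = adj ?u ** (?u ** ?u)" by (simp add: matrix_mul_assoc)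
  also have "\<dots> = mat 1" using m a by simp
  finally show ?thesis .
qed

lemma WW_mult:
  assumes "unitary_rep G U" "x \<in> G" "y \<in> G"
  shows "WW U (x ** y) = (WW U x ** WW U y :: complex^('n::finite\<Rightarrow>'a::finite)^('n\<Rightarrow>'a))"
  using assms by (simp add: WW_def unitary_rep_def tensU_mult)

lemma WW_one:
  assumes "unitary_rep G U" "mat 1 \<in> G"
  shows "WW U (mat 1) = (mat 1 :: complex^('n::finite\<Rightarrow>'a::finite)^('n\<Rightarrow>'a))"
  using U_one[OF assms] by (simp add: WW_def tensU_one)

lemma WW_unitary:
  assumes "unitary_rep G U" "x \<in> G"
  shows "adj (WW U x) ** WW U x = (mat 1 :: complex^('n::finite\<Rightarrow>'a::finite)^('n\<Rightarrow>'a))"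
    "WW U x ** adj (WW U x) = (mat 1 :: complex^('n\<Rightarrow>'a)^('n\<Rightarrow>'a))"
proof -
  have "adj (U x) ** U x = mat 1" using assms unfolding unitary_rep_def unitary_mat_def by blast
  then show 1: "adj (WW U x) ** WW U x = mat 1"
    by (simp add: WW_def adj_tensU tensU_mult tensU_one)
  then show "WW U x ** adj (WW U x) = mat 1"
    by (simp add: matrix_left_right_inverse)
qed

lemma matrix_inv_props:
  fixes x :: "'a::field^'n^'n"
  assumes "invertible x"
  shows "x ** matrix_inv x = mat 1" "matrix_inv x ** x = mat 1"
proof -
  have "\<exists>A'. x ** A' = mat 1 \<and> A' ** x = mat 1" using assms by (simp add: invertible_def)
  then have "x ** matrix_inv x = mat 1 \<and> matrix_inv x ** x = mat 1"
    unfolding matrix_inv_def by (rule someI_ex)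
  then show "x ** matrix_inv x = mat 1" "matrix_inv x ** x = mat 1" by auto
qed

lemma WW_inv:
  assumes "compact_matrix_group G" "unitary_rep G U" "x \<in> G"
  shows "WW U (matrix_inv x) = (adj (WW U x) :: complex^('n::finite\<Rightarrow>'a::finite)^('n\<Rightarrow>'a))"
proof -
  have inv: "invertible x" "matrix_inv x \<in> G" and one: "mat 1 \<in> G"
    using assms unfolding compact_matrix_group_def by auto
  have "WW U (matrix_inv x) ** WW U x = (WW U (matrix_inv x ** x) :: complex^('n\<Rightarrow>'a)^('n\<Rightarrow>'a))"
    by (rule WW_mult[OF assms(2) inv(2) assms(3), symmetric])
  also have "\<dots> = mat 1"
    using matrix_inv_props(2)[OF inv(1)] WW_one[OF assms(2) one] by simp
  finally have "WW U (matrix_inv x) ** WW U x = (mat 1 :: complex^('n\<Rightarrow>'a)^('n\<Rightarrow>'a))" .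
  then have "WW U (matrix_inv x) = (WW U (matrix_inv x) ** (WW U x ** adj (WW U x)) :: complex^('n\<Rightarrow>'a)^('n\<Rightarrow>'a))"
    using WW_unitary[OF assms(2,3), where 'n='n] by simp
  also have "\<dots> = adj (WW U x)"
    by (simp add: matrix_mul_assoc \<open>WW U (matrix_inv x) ** WW U x = mat 1\<close>)
  finally show ?thesis .
qed

lemma mpow_in:
  assumes "compact_matrix_group G" "x \<in> G"
  shows "mpow x j \<in> G"
  using assms by (induction j) (auto simp: compact_matrix_group_def)

lemma WW_mpow:
  assumes "compact_matrix_group G" "unitary_rep G U" "x \<in> G"
  shows "WW U (mpow x j) = (mpow (WW U x) j :: complex^('n::finite\<Rightarrow>'a::finite)^('n\<Rightarrow>'a))"
proof (induction j)
  case 0 then show ?case using WW_one[OF assms(2)] assms(1) by (simp add: compact_matrix_group_def)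
next
  case (Suc j)
  have "WW U (mpow x (Suc j)) = (WW U x ** WW U (mpow x j) :: complex^('n\<Rightarrow>'a)^('n\<Rightarrow>'a))"
    using WW_mult[OF assms(2,3) mpow_in[OF assms(1,3)]] by simp
  then show ?case using Suc.IH by simp
qed

lemma l_mpow:
  assumes "compact_matrix_group G" "conj_inv_length_function G l" "x \<in> G"
  shows "l (mpow x j) \<le> real j * l x"
proof (induction j)
  case 0
  have "mat 1 \<in> G" using assms(1) by (simp add: compact_matrix_group_def)
  then have "l (mat 1) = 0" using assms(2) unfolding conj_inv_length_function_def by blast
  then show ?case by simp
next
  case (Suc j)
  have "l (mpow x (Suc j)) \<le> l x + l (mpow x j)"
    using assms mpow_in[OF assms(1,3)] unfolding conj_inv_length_function_def by simp
  then show ?case using Suc by (simp add: algebra_simps)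
qed

lemma WW_cont:
  assumes "unitary_rep G U"
  shows "continuous_on G (WW U :: _ \<Rightarrow> complex^('n::finite \<Rightarrow> 'a::finite)^('n \<Rightarrow> 'a))"
proof -
  have c: "continuous_on G U" using assms by (simp add: unitary_rep_def)
  show ?thesis unfolding WW_def tensU_def
    by (intro continuous_on_vec_lambda continuous_on_prod continuous_on_component c)
qed

lemma lower_bound:
  assumes G: "compact_matrix_group G" and L: "conj_inv_length_function G l" and R: "unitary_rep G U"
  shows "\<exists>C\<ge>0. \<exists>B\<ge>0. \<forall>x\<in>G. norm (WW U x - mat 1 :: complex^('n::finite\<Rightarrow>'a::finite)^('n\<Rightarrow>'a)) \<le> C * l x
     \<and> norm (WW U x - mat 1 :: complex^('n\<Rightarrow>'a)^('n\<Rightarrow>'a)) \<le> B"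
proof -
  define F where "F x = norm (WW U x - mat 1 :: complex^('n\<Rightarrow>'a)^('n\<Rightarrow>'a))" for x
  have cG: "compact G" and one: "mat 1 \<in> G" using G by (auto simp: compact_matrix_group_def)
  have lnn: "\<And>x. x \<in> G \<Longrightarrow> 0 \<le> l x" and l0: "\<And>x. x \<in> G \<Longrightarrow> l x = 0 \<longleftrightarrow> x = mat 1"
    and cl: "continuous_on G l"
    using L by (auto simp: conj_inv_length_function_def)
  have cF: "continuous_on G F" unfolding F_def
    by (intro continuous_on_norm continuous_on_diff continuous_on_const WW_cont[OF R])
  have F1: "F (mat 1) = 0" using WW_one[OF R one] by (simp add: F_def)
  obtain B where B: "\<And>x. x \<in> G \<Longrightarrow> F x \<le> B"
  proof -
    have "compact (F ` G)" by (rule compact_continuous_image[OF cF cG])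
    then have "bounded (F ` G)" by (rule compact_imp_bounded)
    then obtain B where B: "\<forall>y\<in>F ` G. norm y \<le> B" by (auto simp: bounded_iff)
    have "F x \<le> B" if "x \<in> G" for x
    proof -
      have "norm (F x) \<le> B" using B that by blast
      then show ?thesis by simp
    qed
    then show ?thesis using that by blast
  qed
  have B0: "0 \<le> B" using B[OF one] F1 by simp
  define K where "K = G \<inter> F -` {1/2..}"
  have "closed K" unfolding K_def
    by (rule continuous_closed_preimage[OF cF compact_imp_closed[OF cG] closed_atLeast])
  moreover have "K = G \<inter> K" by (auto simp: K_def)
  ultimately have cK: "compact K" using compact_Int_closed[OF cG] by metis
  obtain c0 where c0: "c0 > 0" "\<And>x. x \<in> K \<Longrightarrow> c0 \<le> l x"
  proof (cases "K = {}")
    case True then show ?thesis using that[of 1] by auto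
  next
    case False
    have clK: "continuous_on K l" by (rule continuous_on_subset[OF cl]) (auto simp: K_def)
    obtain x0 where x0: "x0 \<in> K" "\<And>y. y \<in> K \<Longrightarrow> l x0 \<le> l y"
      using continuous_attains_inf[OF cK False clK] by auto
    have x0G: "x0 \<in> G" and Fx0: "F x0 \<ge> 1/2" using x0 by (auto simp: K_def)
    have "x0 \<noteq> mat 1" using Fx0 F1 by auto
    then have "l x0 > 0" using lnn[OF x0G] l0[OF x0G] by auto
    then show ?thesis using that[of "l x0"] x0 by auto
  qed
  have main: "F x \<le> (1 + B) / c0 * l x" if x: "x \<in> G" for x
  proof (cases "F x = 0")
    case True then show ?thesis using lnn[OF x] B0 c0 by simp
  next
    case False
    then have Fp: "F x > 0" by (simp add: F_def)
    define M where "M = nat \<lfloor>1 / F x\<rfloor> + 1"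
    have M1: "M \<ge> 1" by (simp add: M_def)
    have fl: "0 \<le> \<lfloor>1 / F x\<rfloor>" using Fp by simp
    have rM: "real M = of_int \<lfloor>1 / F x\<rfloor> + 1" using fl by (simp add: M_def)
    have "1 / F x < real M" unfolding rM by linarith
    then have Mgt: "1 / real M < F x" using Fp M1 by (simp add: field_simps)
    have Mle: "real M \<le> 1 / F x + 1" unfolding rM by linarith
    have "\<not> (\<forall>j. 1 \<le> j \<longrightarrow> j \<le> M \<longrightarrow> norm (mpow (WW U x :: complex^('n\<Rightarrow>'a)^('n\<Rightarrow>'a)) j - mat 1) \<le> 1/2)"
    proof
      assume "\<forall>j. 1 \<le> j \<longrightarrow> j \<le> M \<longrightarrow> norm (mpow (WW U x :: complex^('n\<Rightarrow>'a)^('n\<Rightarrow>'a)) j - mat 1) \<le> 1/2"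
      then have "F x \<le> 1 / real M" unfolding F_def using power_lemma[OF M1] by blast
      then show False using Mgt by simp
    qed
    then obtain j where j: "1 \<le> j" "j \<le> M"
      and jn: "norm (mpow (WW U x :: complex^('n\<Rightarrow>'a)^('n\<Rightarrow>'a)) j - mat 1) > 1/2"
      by auto
    have "mpow x j \<in> K"
      using jn mpow_in[OF G x] WW_mpow[OF G R x, where 'n='n] by (simp add: K_def F_def)
    then have "c0 \<le> l (mpow x j)" by (rule c0(2))
    also have "\<dots> \<le> real j * l x" by (rule l_mpow[OF G L x])
    also have "\<dots> \<le> real M * l x" using j lnn[OF x] by (simp add: mult_right_mono)
    also have "\<dots> \<le> (1 / F x + 1) * l x" using Mle lnn[OF x] by (simp add: mult_right_mono)
    finally have "c0 \<le> (1 / F x + 1) * l x" .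
    then have "c0 * F x \<le> (1 + F x) * l x" using Fp by (simp add: field_simps)
    also have "\<dots> \<le> (1 + B) * l x" using B[OF x] lnn[OF x] by (simp add: mult_right_mono)
    finally have "c0 * F x \<le> (1 + B) * l x" .
    then show ?thesis using c0(1) by (simp add: field_simps)
  qed
  show ?thesis
    by (rule exI[of _ "(1 + B) / c0"], rule conjI, use B0 c0(1) in simp, rule exI[of _ B])
      (use main B B0 in \<open>auto simp: F_def\<close>)
qed

lemma sum_prod_univ:
  "(\<Sum>p\<in>(UNIV::('x::finite \<times> 'y::finite) set). g p) = (\<Sum>i\<in>UNIV. \<Sum>a\<in>UNIV. (g (i,a) :: 'c::comm_monoid_add))"
  using sum.cartesian_product[of "\<lambda>i a. g (i,a)" "UNIV::'y set" "UNIV::'x set"] by simp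

lemma outer_conj:
  fixes A :: "complex^'n^'n"
  shows "A ** (\<chi> p q. u$p * cnj (u$q)) ** adj A = (\<chi> p q. (A *v u)$p * cnj ((A *v u)$q))"
proof -
  have "(\<Sum>r\<in>UNIV. (\<Sum>s\<in>UNIV. A$p$s * (u$s * cnj (u$r))) * cnj (A$q$r))
      = (\<Sum>s\<in>UNIV. A$p$s * u$s) * cnj (\<Sum>r\<in>UNIV. A$q$r * u$r)" for p q
  proof -
    have "(\<Sum>r\<in>UNIV. (\<Sum>s\<in>UNIV. A$p$s * (u$s * cnj (u$r))) * cnj (A$q$r))
        = (\<Sum>r\<in>UNIV. \<Sum>s\<in>UNIV. (A$p$s * u$s) * (cnj (A$q$r) * cnj (u$r)))"
      by (simp only: sum_distrib_right) (simp add: mult_ac)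
    also have "\<dots> = (\<Sum>s\<in>UNIV. \<Sum>r\<in>UNIV. (A$p$s * u$s) * (cnj (A$q$r) * cnj (u$r)))"
      by (rule sum.swap)
    also have "\<dots> = (\<Sum>s\<in>UNIV. A$p$s * u$s) * (\<Sum>r\<in>UNIV. cnj (A$q$r) * cnj (u$r))"
      by (rule sum_product[symmetric])
    also have "\<dots> = (\<Sum>s\<in>UNIV. A$p$s * u$s) * cnj (\<Sum>r\<in>UNIV. A$q$r * u$r)"
      by simp
    finally show ?thesis .
  qed
  note X = this
  show ?thesis
    unfolding vec_eq_iff
  proof (intro allI)
    fix p q
    have "(A ** (\<chi> p q. u$p * cnj (u$q)) ** adj A) $ p $ q
        = (\<Sum>r\<in>UNIV. (\<Sum>s\<in>UNIV. A$p$s * (u$s * cnj (u$r))) * cnj (A$q$r))"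
      by (simp only: matrix_matrix_mult_def vec_lambda_beta adj_nth)
    also have "\<dots> = (\<Sum>s\<in>UNIV. A$p$s * u$s) * cnj (\<Sum>r\<in>UNIV. A$q$r * u$r)"
      by (rule X)
    also have "\<dots> = (\<chi> p q. (A *v u)$p * cnj ((A *v u)$q)) $ p $ q"
      by (simp only: matrix_vector_mult_def vec_lambda_beta)
    finally show "(A ** (\<chi> p q. u$p * cnj (u$q)) ** adj A) $ p $ q = (\<chi> p q. (A *v u)$p * cnj ((A *v u)$q)) $ p $ q" .
  qed
qed

lemma trace_outer:
  "trace (S ** (\<chi> p q. w$p * cnj (w$q))) = cinner w (S *v w)"
  by (simp add: trace_def matrix_matrix_mult_def cinner_def matrix_vector_mult_def sum_distrib_left mult_ac)

lemma berezin_eq: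
  "berezin U \<xi> S y = cinner (WW U y *v tensv \<xi>) (S *v (WW U y *v tensv \<xi>))"
  unfolding berezin_def alphan_WW Pn_def outer_conj trace_outer by (rule refl)

lemma berezin_diff: "berezin U \<xi> (A - B) y = berezin U \<xi> A y - berezin U \<xi> B y"
  by (simp add: berezin_def msub_rdistrib trace_sub)

lemma berezin_shift:
  fixes S :: "complex^('n::finite\<Rightarrow>'a::finite)^('n\<Rightarrow>'a)"
  assumes G: "compact_matrix_group G" and R: "unitary_rep G U" and x: "x \<in> G" and y: "y \<in> G"
  shows "berezin U \<xi> S (matrix_inv x ** y) = berezin U \<xi> (alphan U x S) y"
proof -
  let ?Wx = "WW U x :: complex^('n\<Rightarrow>'a)^('n\<Rightarrow>'a)"
  let ?Wy = "WW U y :: complex^('n\<Rightarrow>'a)^('n\<Rightarrow>'a)"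
  let ?P = "Pn \<xi> :: complex^('n\<Rightarrow>'a)^('n\<Rightarrow>'a)"
  have ix: "matrix_inv x \<in> G" using G x by (simp add: compact_matrix_group_def)
  have W: "(WW U (matrix_inv x ** y) :: complex^('n\<Rightarrow>'a)^('n\<Rightarrow>'a)) = adj ?Wx ** ?Wy"
    using WW_mult[OF R ix y, where 'n='n] WW_inv[OF G R x, where 'n='n] by simp
  have "berezin U \<xi> (alphan U x S) y = trace (?Wx ** (S ** adj ?Wx ** (?Wy ** ?P ** adj ?Wy)))"
    by (simp add: berezin_def alphan_WW matrix_mul_assoc)
  also have "\<dots> = trace ((S ** adj ?Wx ** (?Wy ** ?P ** adj ?Wy)) ** ?Wx)"
    by (rule trace_mul_sym)
  also have "\<dots> = trace (S ** ((adj ?Wx ** ?Wy) ** ?P ** adj (adj ?Wx ** ?Wy)))"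
    by (simp add: adj_mult matrix_mul_assoc)
  also have "\<dots> = berezin U \<xi> S (matrix_inv x ** y)"
    by (simp add: berezin_def alphan_WW W)
  finally show ?thesis by simp
qed

lemma block_bound:
  fixes S :: "'k::finite \<Rightarrow> 'k \<Rightarrow> complex^'i::finite^'i"
  assumes w: "norm w = 1"
  shows "opnorm ((\<chi> i j. cinner w (S i j *v w)) :: complex^'k^'k) \<le> opnorm (blockop S)"
proof (rule opnorm_le)
  fix c :: "complex^'k"
  let ?M = "(\<chi> i j. cinner w (S i j *v w)) :: complex^'k^'k"
  let ?B = "blockop S"
  define v :: "complex^('k \<times> 'i)" where "v = (\<chi> p. c$(fst p) * w$(snd p))"
  have nv2: "(norm v)^2 = (norm c)^2"
  proof -
    have "(norm v)^2 = (\<Sum>i\<in>UNIV. \<Sum>a\<in>UNIV. (cmod (c$i))^2 * (cmod (w$a))^2)"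
      by (simp add: vec_norm_sq sum_prod_univ v_def norm_mult power_mult_distrib)
    also have "\<dots> = (norm c)^2 * (norm w)^2"
      by (simp add: vec_norm_sq sum_product)
    finally show ?thesis using w by simp
  qed
  then have nv: "norm v = norm c" by (simp add: power2_eq_iff_nonneg)
  have Bv: "(?B *v v)$(i,a) = (\<Sum>j\<in>UNIV. \<Sum>b\<in>UNIV. S i j $ a $ b * (c$j * w$b))" for i a
    by (simp add: matrix_vector_mult_def blockop_def v_def sum_prod_univ)
  have Mc: "(?M *v c)$i = (\<Sum>a\<in>UNIV. cnj (w$a) * (?B *v v)$(i,a))" for i
  proof -
    have "(?M *v c)$i = (\<Sum>j\<in>UNIV. \<Sum>a\<in>UNIV. \<Sum>b\<in>UNIV. cnj (w$a) * (S i j $ a $ b * (c$j * w$b)))"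
      by (simp add: matrix_vector_mult_def cinner_def sum_distrib_left sum_distrib_right mult_ac)
    also have "\<dots> = (\<Sum>a\<in>UNIV. \<Sum>j\<in>UNIV. \<Sum>b\<in>UNIV. cnj (w$a) * (S i j $ a $ b * (c$j * w$b)))"
      by (rule sum.swap)
    also have "\<dots> = (\<Sum>a\<in>UNIV. cnj (w$a) * (?B *v v)$(i,a))"
      by (simp add: Bv sum_distrib_left)
    finally show ?thesis .
  qed
  have "(norm (?M *v c))^2 \<le> (norm (?B *v v))^2"
  proof -
    have "(norm (?M *v c))^2 = (\<Sum>i\<in>UNIV. (cmod (\<Sum>a\<in>UNIV. cnj (w$a) * (?B *v v)$(i,a)))^2)"
      by (simp add: vec_norm_sq Mc)
    also have "\<dots> \<le> (\<Sum>i\<in>UNIV. (\<Sum>a\<in>UNIV. (cmod (cnj (w$a)))^2) * (\<Sum>a\<in>UNIV. (cmod ((?B *v v)$(i,a)))^2))"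
      by (intro sum_mono cauchy_schwarz_c)
    also have "\<dots> = (\<Sum>i\<in>UNIV. \<Sum>a\<in>UNIV. (cmod ((?B *v v)$(i,a)))^2)"
      using w by (simp add: vec_norm_sq[symmetric])
    also have "\<dots> = (norm (?B *v v))^2"
      by (simp add: vec_norm_sq sum_prod_univ)
    finally show ?thesis .
  qed
  then have "norm (?M *v c) \<le> norm (?B *v v)" by (rule power2_le_imp_le) simp
  also have "\<dots> \<le> opnorm ?B * norm v" by (rule opnorm_mv)
  finally show "norm (?M *v c) \<le> opnorm ?B * norm c" using nv by simp
qed

lemma blockop_norm_bound:
  fixes S :: "'k::finite \<Rightarrow> 'k \<Rightarrow> complex^'i::finite^'i"
  assumes "\<And>i j. norm (S i j) \<le> e"
  shows "norm (blockop S) \<le> real CARD('k) * e"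
proof -
  obtain i0 :: 'k where True by blast
  have e0: "0 \<le> e" using assms[of i0 i0] norm_ge_zero order_trans by blast
  have "(norm (blockop S))^2 = (\<Sum>i\<in>UNIV. \<Sum>a\<in>UNIV. \<Sum>j\<in>UNIV. \<Sum>b\<in>UNIV. (cmod (S i j $ a $ b))^2)"
    by (simp add: mat_norm_sq sum_prod_univ blockop_def)
  also have "\<dots> = (\<Sum>i\<in>UNIV. \<Sum>j\<in>UNIV. \<Sum>a\<in>UNIV. \<Sum>b\<in>UNIV. (cmod (S i j $ a $ b))^2)"
    by (rule sum.cong[OF refl], rule sum.swap)
  also have "\<dots> = (\<Sum>i\<in>UNIV. \<Sum>j\<in>UNIV. (norm (S i j))^2)"
    by (simp add: mat_norm_sq)
  also have "\<dots> \<le> (\<Sum>i\<in>(UNIV::'k set). \<Sum>j\<in>(UNIV::'k set). e^2)"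
    by (intro sum_mono power_mono assms norm_ge_zero)
  also have "\<dots> = (real CARD('k) * e)^2"
    by (simp add: power2_eq_square)
  finally show ?thesis by (rule power2_le_imp_le) (simp add: e0)
qed

lemma alpha_bound:
  fixes T :: "complex^'i::finite^'i"
  shows "norm (W ** T ** adj W - T) \<le> norm (W - mat 1) * norm T * (norm (W - mat 1) + norm (mat 1 :: complex^'i^'i)) + norm T * norm (W - mat 1)"
proof -
  have e: "W ** T ** adj W - T = (W - mat 1) ** T ** adj W + T ** adj (W - mat 1)"
    by (simp add: msub_rdistrib msub_ldistrib adj_diff)
  have nW: "norm (adj W) \<le> norm (W - mat 1) + norm (mat 1 :: complex^'i^'i)"
    using norm_triangle_ineq[of "W - mat 1" "mat 1"] by (simp add: norm_adj)
  have "norm (W ** T ** adj W - T) \<le> norm ((W - mat 1) ** T ** adj W) + norm (T ** adj (W - mat 1))"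
    unfolding e by (rule norm_triangle_ineq)
  also have "\<dots> \<le> norm (W - mat 1) * norm T * norm (adj W) + norm T * norm (W - mat 1)"
  proof (rule add_mono)
    show "norm ((W - mat 1) ** T ** adj W) \<le> norm (W - mat 1) * norm T * norm (adj W)"
      by (rule order_trans[OF mm_norm mult_right_mono[OF mm_norm norm_ge_zero]])
    show "norm (T ** adj (W - mat 1)) \<le> norm T * norm (W - mat 1)"
      using mm_norm[of T "adj (W - mat 1)"] by (simp add: norm_adj)
  qed
  also have "\<dots> \<le> norm (W - mat 1) * norm T * (norm (W - mat 1) + norm (mat 1 :: complex^'i^'i)) + norm T * norm (W - mat 1)"
    using nW by (intro add_mono mult_left_mono) auto
  finally show ?thesis .
qed

theorem lemma8p1:
  fixes G :: "(complex^'d^'d) set"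
    and l :: "complex^'d^'d \<Rightarrow> real"
    and U :: "complex^'d^'d \<Rightarrow> complex^'a::finite^'a"
    and \<xi> :: "complex^'a"
    and T :: "'k::finite \<Rightarrow> 'k \<Rightarrow> complex^('n::finite \<Rightarrow> 'a)^('n \<Rightarrow> 'a)"
    and \<epsilon> :: real
  assumes "connected_compact_semisimple_group G"
    and "conj_inv_length_function G l"
    and "irreducible_rep G U"
    and "highest_weight_vector G U \<xi>"
    and "norm \<xi> = 1"
    and "\<forall>i j. T i j \<in> opsOn (Hn G U \<xi> :: (complex^('n \<Rightarrow> 'a)) set)"
    and "\<epsilon> > 0"
  shows "Lk l G (\<lambda>i j. berezin U \<xi> (T i j)) < Lnk l G U T + ennreal \<epsilon>"
proof -
  have G: "compact_matrix_group G" using assms(1) by (simp add: connected_compact_semisimple_group_def)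
  have L: "conj_inv_length_function G l" by (rule assms(2))
  have R: "unitary_rep G U" using assms(3) by (simp add: irreducible_rep_def)
  have one: "mat 1 \<in> G" using G by (simp add: compact_matrix_group_def)
  have lnn: "\<And>x. x \<in> G \<Longrightarrow> 0 \<le> l x" and l0: "\<And>x. x \<in> G \<Longrightarrow> l x = 0 \<longleftrightarrow> x = mat 1"
    using L by (auto simp: conj_inv_length_function_def)
  have lpos: "l x > 0" if "x \<in> G - {mat 1}" for x
    using lnn[of x] l0[of x] that by force
  obtain C B where C: "C \<ge> 0" "B \<ge> 0"
    and CB: "\<And>x. x \<in> G \<Longrightarrow> norm (WW U x - mat 1 :: complex^('n\<Rightarrow>'a)^('n\<Rightarrow>'a)) \<le> C * l x
        \<and> norm (WW U x - mat 1 :: complex^('n\<Rightarrow>'a)^('n\<Rightarrow>'a)) \<le> B"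
    using lower_bound[OF G L R, where 'n='n] by blast
  define S where "S x = (\<lambda>i j. alphan U x (T i j) - T i j)" for x
  define N where "N x = opnorm (blockop (S x))" for x
  define \<tau> where "\<tau> = (\<Sum>i\<in>UNIV. \<Sum>j\<in>UNIV. norm (T i j))"
  define D where "D = \<tau> * (B + norm (mat 1 :: complex^('n\<Rightarrow>'a)^('n\<Rightarrow>'a)) + 1)"
  have \<tau>: "norm (T i j) \<le> \<tau>" for i j
  proof -
    have "norm (T i j) \<le> (\<Sum>j\<in>UNIV. norm (T i j))"
      by (rule member_le_sum) auto
    also have "\<dots> \<le> \<tau>" unfolding \<tau>_def
      by (rule member_le_sum[where f="\<lambda>i. \<Sum>j\<in>UNIV. norm (T i j)"]) (auto intro: sum_nonneg)
    finally show ?thesis .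
  qed
  have \<tau>0: "0 \<le> \<tau>" unfolding \<tau>_def by (intro sum_nonneg norm_ge_zero)
  have D0: "0 \<le> D" unfolding D_def using \<tau>0 C by simp
  have Nb: "N x \<le> real CARD('k) * D * C * l x" if x: "x \<in> G" for x
  proof -
    let ?F = "norm (WW U x - mat 1 :: complex^('n\<Rightarrow>'a)^('n\<Rightarrow>'a))"
    have F: "?F \<le> C * l x" "?F \<le> B" using CB[OF x] by auto
    have Sij: "norm (S x i j) \<le> D * ?F" for i j
    proof -
      have "norm (S x i j) \<le> ?F * norm (T i j) * (?F + norm (mat 1 :: complex^('n\<Rightarrow>'a)^('n\<Rightarrow>'a))) + norm (T i j) * ?F"
        unfolding S_def alphan_WW by (rule alpha_bound)
      also have "\<dots> \<le> ?F * \<tau> * (B + norm (mat 1 :: complex^('n\<Rightarrow>'a)^('n\<Rightarrow>'a))) + \<tau> * ?F"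
        using F(2) \<tau>[of i j] \<tau>0
        by (intro add_mono mult_mono mult_left_mono add_right_mono) (auto intro: order_trans[OF norm_ge_zero])
      also have "\<dots> = D * ?F" by (simp add: D_def algebra_simps)
      finally show ?thesis .
    qed
    have "N x \<le> norm (blockop (S x))" unfolding N_def by (rule opnorm_fro)
    also have "\<dots> \<le> real CARD('k) * (D * ?F)" by (rule blockop_norm_bound) (rule Sij)
    also have "\<dots> \<le> real CARD('k) * (D * (C * l x))"
      using F(1) D0 by (intro mult_left_mono) auto
    finally show ?thesis by (simp add: mult_ac)
  qed
  have NL: "supnormk G (\<lambda>i j y. berezin U \<xi> (T i j) (matrix_inv x ** y) - berezin U \<xi> (T i j) y) \<le> N x"
    if x: "x \<in> G" for x
    unfolding supnormk_def
  proof (rule cSUP_least)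
    show "G \<noteq> {}" using one by blast
    fix y assume y: "y \<in> G"
    let ?w = "(WW U y :: complex^('n\<Rightarrow>'a)^('n\<Rightarrow>'a)) *v tensv \<xi>"
    have nw: "norm ?w = 1"
      using unitary_norm[OF WW_unitary(1)[OF R y, where 'n='n]] norm_tensv[OF assms(5), where 'n='n] by simp
    have "((\<chi> i j. berezin U \<xi> (T i j) (matrix_inv x ** y) - berezin U \<xi> (T i j) y) :: complex^'k^'k)
        = (\<chi> i j. cinner ?w (S x i j *v ?w))"
    proof -
      have e: "berezin U \<xi> (T i j) (matrix_inv x ** y) - berezin U \<xi> (T i j) y = cinner ?w (S x i j *v ?w)" for i j
      proof -
        have "berezin U \<xi> (T i j) (matrix_inv x ** y) - berezin U \<xi> (T i j) y = berezin U \<xi> (S x i j) y"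
          unfolding S_def berezin_diff berezin_shift[OF G R x y] by (rule refl)
        also have "\<dots> = cinner ?w (S x i j *v ?w)" by (rule berezin_eq)
        finally show ?thesis .
      qed
      show ?thesis by (simp only: e)
    qed
    then show "opnorm ((\<chi> i j. berezin U \<xi> (T i j) (matrix_inv x ** y) - berezin U \<xi> (T i j) y) :: complex^'k^'k) \<le> N x"
      using block_bound[OF nw, of "S x"] by (simp add: N_def)
  qed
  let ?K = "real CARD('k) * D * C"
  have le: "Lk l G (\<lambda>i j. berezin U \<xi> (T i j)) \<le> Lnk l G U T"
    unfolding Lk_def Lnk_def
  proof (rule SUP_mono)
    fix x assume x: "x \<in> G - {mat 1}"
    then have "ennreal (supnormk G (\<lambda>i j y. berezin U \<xi> (T i j) (matrix_inv x ** y) - berezin U \<xi> (T i j) y) / l x)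
        \<le> ennreal (opnorm (blockop (\<lambda>i j. alphan U x (T i j) - T i j)) / l x)"
      using NL[of x] lpos[OF x] by (intro ennreal_leI divide_right_mono) (auto simp: N_def S_def)
    then show "\<exists>m\<in>G - {mat 1}. ennreal (supnormk G (\<lambda>i j y. berezin U \<xi> (T i j) (matrix_inv x ** y) - berezin U \<xi> (T i j) y) / l x)
        \<le> ennreal (opnorm (blockop (\<lambda>i j. alphan U m (T i j) - T i j)) / l m)"
      using x by blast
  qed
  have fin: "Lnk l G U T \<le> ennreal ?K"
    unfolding Lnk_def
  proof (rule SUP_least)
    fix x assume x: "x \<in> G - {mat 1}"
    have "N x \<le> ?K * l x" using Nb[of x] x by simp
    then have "N x / l x \<le> ?K" using lpos[OF x] by (simp add: pos_divide_le_eq)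
    then show "ennreal (opnorm (blockop (\<lambda>i j. alphan U x (T i j) - T i j)) / l x) \<le> ennreal ?K"
      by (intro ennreal_leI) (simp add: N_def S_def)
  qed
  have "Lnk l G U T < top" by (rule le_less_trans[OF fin ennreal_less_top])
  then obtain r where r: "r \<ge> 0" "Lnk l G U T = ennreal r" by (auto simp: less_top_ennreal)
  have "ennreal r < ennreal (r + \<epsilon>)" using r assms(7) by (intro ennreal_lessI) auto
  also have "\<dots> = ennreal r + ennreal \<epsilon>" using r assms(7) by (simp add: ennreal_plus)
  finally have "Lnk l G U T < Lnk l G U T + ennreal \<epsilon>" using r by simp
  then show ?thesis using le by (rule le_less_trans[rotated])
qed

end
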